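(* Let $g>0$, $\gamma>0$, and let $\hat\nu:\mathbb R\to[\nu_0,\nu_1]$ be a stretch-limiting constitutive function (independent of $s$) as in the context. For $b\in(\nu_0,\nu_1)$, let $N(0)\in\mathbb R$ be the unique number with $$b=\int_0^1\hat\nu(N(0)+g\gamma s)\,ds,$$ so that the vertical uniform string hanging from $\mathbf 0$ to $b\mathbf k$ has tension $N(s)=N(0)+g\gamma s$. Let $\epsilon\in(0,1)$. Then for all $\gamma>0$ sufficiently small (depending on $\epsilon$ and $\hat\nu$) the following holds. If $$\nu_1-(1-\epsilon)\frac{g\gamma}{2}\hat\nu_{N^-}(N_1)\le b<\nu_1,$$ then $N(0)>0$ and $\frac{N_1-N(0)}{g\gamma}\in(0,1)$ (i.e. the string is a union of an elongated extensible segment and an inextensible segment). Conversely, if $N(0)>0$ and $\frac{N_1-N(0)}{g\gamma}\in(0,1)$, then $$\nu_1-(1+\epsilon)\frac{g\gamma}{2}\hat\nu_{N^-}(N_1)\le b<\nu_1.$$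
   Context: Stretch-limited constitutive function: there are constants $N_0<0<N_1$ and $0<\nu_0<1<\nu_1$ with $\hat\nu(N)=\nu_0$ for $N\le N_0$, $\hat\nu(N)=\nu_1$ for $N\ge N_1$, $\hat\nu\in C^\infty([N_0,N_1];[\nu_0,\nu_1])$, $\hat\nu(0)=1$, and $\hat\nu'(N)\ge c>0$ on $[N_0,N_1]$. $\hat\nu_{N^-}(N_1)$ denotes the left derivative of $\hat\nu$ at $N_1$ (the derivative at $N_1$ of the restriction of $\hat\nu$ to $[N_0,N_1]$). The setting is a uniform vertical string of mass per unit reference length $\gamma$ with $\mathbf r(0)=\mathbf 0$, $\mathbf r(1)=b\mathbf k$, $\mathbf r=z\mathbf k$, stretch $z'(s)=\hat\nu(N(s))$ and tension $N(s)=N(0)+g\gamma s$; the stated integral equation is the condition $z(1)=b$, and existence/uniqueness of $N(0)$ for $b\in(\nu_0,\nu_1)$ holds because $N(0)\mapsto\int_0^1\hat\nu(N(0)+g\gamma s)ds$ is continuous and increasing on $[N_0-g\gamma,N_1]$ with values from $\nu_0$ to $\nu_1$. *)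

theory Defs
  imports "HOL-Analysis.Analysis"
begin

definition smooth_on_interval :: "(real \<Rightarrow> real) \<Rightarrow> real \<Rightarrow> real \<Rightarrow> bool" where
  "smooth_on_interval f a b \<longleftrightarrow>
     (\<exists>D :: nat \<Rightarrow> real \<Rightarrow> real.
        (\<forall>x\<in>{a..b}. D 0 x = f x) \<and>
        (\<forall>k. \<forall>x\<in>{a..b}. (D k has_real_derivative D (Suc k) x) (at x within {a..b})))"

definition stretch_limited ::
  "(real \<Rightarrow> real) \<Rightarrow> real \<Rightarrow> real \<Rightarrow> real \<Rightarrow> real \<Rightarrow> real \<Rightarrow> bool" where
  "stretch_limited nu N0 N1 nu0 nu1 c \<longleftrightarrow>
     N0 < 0 \<and> 0 < N1 \<and> 0 < nu0 \<and> nu0 < 1 \<and> 1 < nu1 \<and> 0 < c \<and>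
     (\<forall>N. N \<le> N0 \<longrightarrow> nu N = nu0) \<and>
     (\<forall>N. N1 \<le> N \<longrightarrow> nu N = nu1) \<and>
     smooth_on_interval nu N0 N1 \<and>
     (\<forall>N\<in>{N0..N1}. nu0 \<le> nu N \<and> nu N \<le> nu1) \<and>
     nu 0 = 1 \<and>
     (\<forall>N\<in>{N0..N1}. \<exists>d. (nu has_real_derivative d) (at N within {N0..N1}) \<and> c \<le> d)"

end

theory Submission imports Defs begin

lemma lin_int:
  fixes \<alpha> \<beta> u :: real assumes "0 \<le> u"
  shows "((\<lambda>s. \<alpha> + \<beta> * s) has_integral (\<alpha> * u + \<beta> * u^2 / 2)) {0..u}"
proof -
  have "((\<lambda>s. \<alpha> + \<beta> * s) has_integral ((\<lambda>s. \<alpha> * s + \<beta> * s^2/2) u - (\<lambda>s. \<alpha> * s + \<beta> * s^2/2) 0)) {0..u}"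
    apply (rule fundamental_theorem_of_calculus[OF assms])
    apply (unfold has_real_derivative_iff_has_vector_derivative[symmetric])
    apply (auto intro!: derivative_eq_intros simp: power2_eq_square)
    done
  then show ?thesis by simp
qed

lemma sl_facts:
  assumes "stretch_limited nu N0 N1 nu0 nu1 c"
  shows "continuous_on UNIV nu" "mono nu" "\<And>x. nu x \<le> nu1"
    "\<And>d. (nu has_real_derivative d) (at N1 within {N0..N1}) \<Longrightarrow> c \<le> d"
proof -
  note A = assms[unfolded stretch_limited_def]
  have N: "N0 < N1" using A by linarith
  have der: "\<And>x. x \<in> {N0..N1} \<Longrightarrow> \<exists>d. (nu has_real_derivative d) (at x within {N0..N1}) \<and> c \<le> d"
    using A by blast
  have con: "continuous_on {N0..N1} nu"
    unfolding continuous_on_eq_continuous_within using der DERIV_continuous by blast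
  have cl: "nu x = nu (max N0 (min N1 x))" for x
    using A by (cases "x \<le> N0"; cases "N1 \<le> x") (auto simp: max_def min_def)
  have "continuous_on UNIV (nu \<circ> (\<lambda>x. max N0 (min N1 x)))"
    apply (rule continuous_on_compose)
     apply (intro continuous_intros)
    apply (rule continuous_on_subset[OF con]) using N by auto
  then show "continuous_on UNIV nu" using cl by (simp add: o_def)
  have inc: "nu x < nu y" if "N0 \<le> x" "x < y" "y \<le> N1" for x y
  proof (rule DERIV_pos_imp_increasing_open[OF that(2)])
    fix z assume z: "x < z" "z < y"
    then have zi: "z \<in> interior {N0..N1}" using that by (simp add: interior_atLeastAtMost_real)
    have "z \<in> {N0..N1}" using z that by auto
    then obtain d where "(nu has_real_derivative d) (at z within {N0..N1})" "c \<le> d"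
      using der by blast
    moreover have "0 < c" using A by linarith
    ultimately show "\<exists>d. DERIV nu z :> d \<and> 0 < d"
      using zi at_within_interior[OF zi] by (metis order_less_le_trans)
  next
    show "continuous_on {x..y} nu" by (rule continuous_on_subset[OF con]) (use that in auto)
  qed
  show "mono nu"
  proof
    fix x y :: real assume "x \<le> y"
    define p where "p = max N0 (min N1 x)"
    define q where "q = max N0 (min N1 y)"
    have pq: "p \<le> q" "N0 \<le> p" "q \<le> N1" using N \<open>x \<le> y\<close> unfolding p_def q_def by auto
    have "nu p \<le> nu q"
    proof (cases "p = q")
      case False then show ?thesis using inc[of p q] pq by auto
    qed simp
    then have "nu (max N0 (min N1 x)) \<le> nu (max N0 (min N1 y))" unfolding p_def q_def .
    then show "nu x \<le> nu y" using cl by metis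
  qed
  show "nu x \<le> nu1" for x
    using A cl[of x] N by (smt (verit) atLeastAtMost_iff)
  fix d assume d: "(nu has_real_derivative d) (at N1 within {N0..N1})"
  obtain d' where d': "(nu has_real_derivative d') (at N1 within {N0..N1})" "c \<le> d'"
    using der[of N1] N by auto
  have "d = d'"
    using vector_derivative_unique_within_closed_interval[of N0 N1 N1 nu d d'] d d' N
    by (auto simp: has_real_derivative_iff_has_vector_derivative)
  then show "c \<le> d" using d' by simp
qed

theorem proposition3p2:
  fixes nu :: "real \<Rightarrow> real" and N0 N1 nu0 nu1 c g \<epsilon> dN1 :: real
  assumes "stretch_limited nu N0 N1 nu0 nu1 c"
    and "(nu has_real_derivative dN1) (at N1 within {N0..N1})"
    and "0 < g"
    and "0 < \<epsilon>" and "\<epsilon> < 1"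
  shows "\<exists>\<gamma>0>0. \<forall>\<gamma> b NZ. 0 < \<gamma> \<and> \<gamma> < \<gamma>0 \<and> nu0 < b \<and> b < nu1 \<and>
            b = integral {0..1} (\<lambda>s. nu (NZ + g * \<gamma> * s)) \<longrightarrow>
           ((nu1 - (1 - \<epsilon>) * (g * \<gamma> / 2) * dN1 \<le> b \<and> b < nu1 \<longrightarrow>
               NZ > 0 \<and> 0 < (N1 - NZ) / (g * \<gamma>) \<and> (N1 - NZ) / (g * \<gamma>) < 1) \<and>
            (NZ > 0 \<and> 0 < (N1 - NZ) / (g * \<gamma>) \<and> (N1 - NZ) / (g * \<gamma>) < 1 \<longrightarrow>
               nu1 - (1 + \<epsilon>) * (g * \<gamma> / 2) * dN1 \<le> b \<and> b < nu1))"
proof -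
  note A = assms(1)[unfolded stretch_limited_def]
  have N: "N0 < N1" "0 < N1" "N0 < 0" "0 < c" using A by linarith+
  have nuN1: "nu N1 = nu1" using A by simp
  have cont: "continuous_on UNIV nu" and mono: "mono nu" and le1: "\<And>x. nu x \<le> nu1"
    using sl_facts[OF assms(1)] by auto
  have dpos: "0 < dN1" using sl_facts(4)[OF assms(1) assms(2)] N by linarith
  define e where "e = \<epsilon> * dN1 / 2"
  have e: "0 < e" using dpos assms(4) by (simp add: e_def)
  from assms(2)[unfolded has_field_derivative_def has_derivative_within_alt] e
  obtain \<delta> where \<delta>: "\<delta> > 0"
    "\<And>y. y \<in> {N0..N1} \<Longrightarrow> norm (y - N1) < \<delta> \<Longrightarrow>
       norm (nu y - nu N1 - dN1 * (y - N1)) \<le> e * norm (y - N1)"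
    by blast
  have UB: "nu y \<le> nu1 - (1 - \<epsilon>/2) * dN1 * (N1 - y)" if "N0 \<le> y" "y \<le> N1" "N1 - y < \<delta>" for y
  proof -
    have "\<bar>nu y - nu1 - dN1 * (y - N1)\<bar> \<le> e * \<bar>y - N1\<bar>"
      using \<delta>(2)[of y] that nuN1 by auto
    then have "nu y - nu1 + dN1 * (N1 - y) \<le> e * (N1 - y)"
      using that by (simp add: abs_le_iff algebra_simps)
    moreover have "nu1 - (1 - \<epsilon>/2) * dN1 * (N1 - y) = nu1 - dN1 * (N1 - y) + e * (N1 - y)"
      unfolding e_def by (simp add: algebra_simps)
    ultimately show ?thesis by linarith
  qed
  have LB: "nu1 - (1 + \<epsilon>) * dN1 * (N1 - y) \<le> nu y" if "N0 \<le> y" "y \<le> N1" "N1 - y < \<delta>" for y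
  proof -
    have "\<bar>nu y - nu1 - dN1 * (y - N1)\<bar> \<le> e * \<bar>y - N1\<bar>"
      using \<delta>(2)[of y] that nuN1 by auto
    moreover have "e * (N1 - y) \<le> \<epsilon> * dN1 * (N1 - y)"
      unfolding e_def using that dpos assms(4) by (intro mult_right_mono) auto
    ultimately show ?thesis using that by (auto simp: algebra_simps abs_if split: if_splits)
  qed
  define m where "m = min \<delta> (min (N1 - N0) N1)"
  have m: "0 < m" using \<delta> N by (simp add: m_def)
  show ?thesis
  proof (rule exI[of _ "m / g"], rule conjI)
    show "0 < m / g" using m assms(3) by simp
  next
    show "\<forall>\<gamma> b NZ. 0 < \<gamma> \<and> \<gamma> < m / g \<and> nu0 < b \<and> b < nu1 \<and>
            b = integral {0..1} (\<lambda>s. nu (NZ + g * \<gamma> * s)) \<longrightarrow>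
           ((nu1 - (1 - \<epsilon>) * (g * \<gamma> / 2) * dN1 \<le> b \<and> b < nu1 \<longrightarrow>
               NZ > 0 \<and> 0 < (N1 - NZ) / (g * \<gamma>) \<and> (N1 - NZ) / (g * \<gamma>) < 1) \<and>
            (NZ > 0 \<and> 0 < (N1 - NZ) / (g * \<gamma>) \<and> (N1 - NZ) / (g * \<gamma>) < 1 \<longrightarrow>
               nu1 - (1 + \<epsilon>) * (g * \<gamma> / 2) * dN1 \<le> b \<and> b < nu1))"
  proof (intro allI impI)
    fix \<gamma> b NZ
    assume H: "0 < \<gamma> \<and> \<gamma> < m / g \<and> nu0 < b \<and> b < nu1 \<and>
            b = integral {0..1} (\<lambda>s. nu (NZ + g * \<gamma> * s))"
    define a where "a = g * \<gamma>"
    have a: "0 < a" "a < \<delta>" "a < N1 - N0" "a < N1"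
      using H assms(3) unfolding a_def m_def by (auto simp: less_divide_eq mult.commute)
    define f where "f = (\<lambda>s. nu (NZ + a * s))"
    have b: "b = integral {0..1} f" using H unfolding f_def a_def by simp
    have fc: "continuous_on UNIV f" unfolding f_def
      by (rule continuous_on_compose2[OF cont]) (auto intro!: continuous_intros)
    have fi: "\<And>u v. (f has_integral integral {u..v} f) {u..v}"
      using fc by (meson continuous_on_subset integrable_continuous_interval
          has_integral_integral subset_UNIV)
    {
      assume h1: "nu1 - (1 - \<epsilon>) * (g * \<gamma> / 2) * dN1 \<le> b" and h2: "b < nu1"
      have "NZ < N1"
      proof (rule ccontr)
        assume "\<not> NZ < N1"
        have eq: "f s = nu1" if "s \<in> {0..1}" for s
        proof -
          have "0 \<le> a * s" using a that by simp
          then have "N1 \<le> NZ + a * s" using \<open>\<not> NZ < N1\<close> by linarith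
          then show "f s = nu1" using A unfolding f_def by blast
        qed
        have "integral {0..1} f = integral {0..1} (\<lambda>s::real. nu1)"
          using eq by (metis (no_types) integral_cong)
        then show False using h2 b by simp
      qed
      have "N1 - a < NZ"
      proof (rule ccontr)
        assume nz: "\<not> N1 - a < NZ"
        define k where "k = (1 - \<epsilon>/2) * dN1"
        have k: "0 < k" using dpos assms(5) by (simp add: k_def)
        have pt: "f s \<le> (nu1 - k * a) + (k * a) * s" if s: "s \<in> {0..1}" for s
        proof -
          have "f s \<le> nu (N1 - a + a * s)" unfolding f_def
            using nz by (intro monoD[OF mono]) auto
          also have "\<dots> \<le> nu1 - k * (N1 - (N1 - a + a * s))"
            unfolding k_def
          proof (rule UB)
            have "a * s \<le> a" using s a by (simp add: mult_left_le)
            then show "N1 - a + a * s \<le> N1" by simp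
            have "0 \<le> a * s" using s a by simp
            then show "N0 \<le> N1 - a + a * s" using a by linarith
            show "N1 - (N1 - a + a * s) < \<delta>" using a \<open>0 \<le> a * s\<close> by linarith
          qed
          finally show ?thesis by (simp add: algebra_simps)
        qed
        have "b \<le> (nu1 - k * a) * 1 + (k * a) * 1^2 / 2"
          unfolding b by (rule has_integral_le[OF fi lin_int pt]) auto
        moreover have "0 < \<epsilon> * a * dN1" using a dpos assms(4) by simp
        moreover have "(nu1 - k * a) * 1 + (k * a) * 1^2 / 2 = nu1 - a * dN1 / 2 + (\<epsilon> * a * dN1) / 4"
          unfolding k_def by (simp add: field_simps)
        moreover have "nu1 - (1 - \<epsilon>) * (g * \<gamma> / 2) * dN1 = nu1 - a * dN1 / 2 + (\<epsilon> * a * dN1) / 2"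
          unfolding a_def by (simp add: field_simps)
        ultimately show False using h1 by linarith
      qed
      then have "0 < NZ" using a by simp
      moreover have "0 < (N1 - NZ) / (g * \<gamma>)" using \<open>NZ < N1\<close> a unfolding a_def by simp
      moreover have "(N1 - NZ) / (g * \<gamma>) < 1" using \<open>N1 - a < NZ\<close> a unfolding a_def[symmetric]
        by (simp add: divide_less_eq)
      ultimately have "NZ > 0 \<and> 0 < (N1 - NZ) / (g * \<gamma>) \<and> (N1 - NZ) / (g * \<gamma>) < 1" by simp
    }
    then have P1: "nu1 - (1 - \<epsilon>) * (g * \<gamma> / 2) * dN1 \<le> b \<and> b < nu1 \<longrightarrow>
               NZ > 0 \<and> 0 < (N1 - NZ) / (g * \<gamma>) \<and> (N1 - NZ) / (g * \<gamma>) < 1" by blast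
    {
      assume h: "NZ > 0 \<and> 0 < (N1 - NZ) / (g * \<gamma>) \<and> (N1 - NZ) / (g * \<gamma>) < 1"
      define t where "t = N1 - NZ"
      have t: "0 < t" "t < a" "0 < NZ" using h a unfolding a_def[symmetric] t_def
        by (auto simp: zero_less_divide_iff divide_less_eq)
      define K where "K = (1 + \<epsilon>) * dN1"
      have K: "0 < K" using dpos assms(4) by (simp add: K_def)
      have pt: "(nu1 - K * a) + (K * a) * s \<le> f s" if s: "s \<in> {0..1}" for s
      proof (cases "N1 \<le> NZ + a * s")
        case True
        then have "f s = nu1" using A unfolding f_def by auto
        moreover have "0 \<le> K * a * (1 - s)" using K a s by simp
        ultimately show ?thesis by (simp add: algebra_simps)
      next
        case False
        have "0 \<le> a * s" using s a by simp
        then have "nu1 - K * (N1 - (NZ + a * s)) \<le> f s" unfolding f_def K_def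
          using False t a N by (intro LB) (auto simp: t_def)
        moreover have "K * (N1 - (NZ + a * s)) \<le> K * (a - a * s)"
          using K t by (intro mult_left_mono) (auto simp: t_def)
        ultimately show ?thesis by (simp add: algebra_simps)
      qed
      have "(nu1 - K * a) * 1 + (K * a) * 1^2 / 2 \<le> b"
        unfolding b by (rule has_integral_le[OF lin_int fi pt]) auto
      moreover have "(nu1 - K * a) * 1 + (K * a) * 1^2 / 2 = nu1 - (1 + \<epsilon>) * (g * \<gamma> / 2) * dN1"
        unfolding K_def a_def by (simp add: field_simps)
      ultimately have "nu1 - (1 + \<epsilon>) * (g * \<gamma> / 2) * dN1 \<le> b" by linarith
      moreover have "b < nu1"
      proof -
        define s0 where "s0 = t / a"
        have s0: "0 < s0" "s0 < 1" "a * s0 = t" using t a by (auto simp: s0_def)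
        define k where "k = (1 - \<epsilon>/2) * dN1"
        have k: "0 < k" using dpos assms(5) by (simp add: k_def)
        have p1: "f s \<le> (nu1 - k * t) + (k * a) * s" if s: "s \<in> {0..s0}" for s
        proof -
          have "a * s \<le> a * s0" using s a by (intro mult_left_mono) auto
          then have "a * s \<le> t" using s0 by simp
          moreover have "0 \<le> a * s" using s a by simp
          ultimately have "f s \<le> nu1 - k * (N1 - (NZ + a * s))" unfolding f_def k_def
            using t a N by (intro UB) (auto simp: t_def)
          then show ?thesis by (simp add: t_def algebra_simps)
        qed
        have i1: "integral {0..s0} f \<le> (nu1 - k * t) * s0 + (k * a) * s0^2 / 2"
          by (rule has_integral_le[OF fi lin_int p1]) (use s0 in auto)
        have i2: "integral {s0..1} f \<le> (1 - s0) * nu1"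
          using has_integral_le[OF fi has_integral_const_real[of nu1 s0 1]] le1 s0 unfolding f_def by auto
        have "b = integral {0..s0} f + integral {s0..1} f"
          unfolding b by (rule Henstock_Kurzweil_Integration.integral_combine[symmetric])
             (use s0 fi has_integral_integrable in auto)
        also have "\<dots> \<le> (nu1 - k * t) * s0 + (k * a) * s0^2 / 2 + (1 - s0) * nu1"
          using i1 i2 by simp
        also have "\<dots> = nu1 - k * t * s0 / 2"
          using s0(3) by (simp add: power2_eq_square algebra_simps)
        also have "\<dots> < nu1" using k t s0 by simp
        finally show ?thesis .
      qed
      ultimately have "nu1 - (1 + \<epsilon>) * (g * \<gamma> / 2) * dN1 \<le> b \<and> b < nu1" by simp
    }
    then have P2: "NZ > 0 \<and> 0 < (N1 - NZ) / (g * \<gamma>) \<and> (N1 - NZ) / (g * \<gamma>) < 1 \<longrightarrow>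
               nu1 - (1 + \<epsilon>) * (g * \<gamma> / 2) * dN1 \<le> b \<and> b < nu1" by blast
    show "(nu1 - (1 - \<epsilon>) * (g * \<gamma> / 2) * dN1 \<le> b \<and> b < nu1 \<longrightarrow>
               NZ > 0 \<and> 0 < (N1 - NZ) / (g * \<gamma>) \<and> (N1 - NZ) / (g * \<gamma>) < 1) \<and>
            (NZ > 0 \<and> 0 < (N1 - NZ) / (g * \<gamma>) \<and> (N1 - NZ) / (g * \<gamma>) < 1 \<longrightarrow>
               nu1 - (1 + \<epsilon>) * (g * \<gamma> / 2) * dN1 \<le> b \<and> b < nu1)" using P1 P2 by blast
  qed
  qed
qed

end
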